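(* For $x\in\mathbb X$ let $C_W(x)=1+\sum_{X\Subset\mathbb X:\,\{x\}\subsetneq X}|W(X)-1|\in[1,\infty]$ and $\overline C_W=\sup_{y\in\mathbb X}C_W(y)$. Suppose that, for all $x\in\mathbb X$, \[ |z(x)W(x)|\prod_{X\Subset\mathbb X:\,\{x\}\subsetneq X}\max\{|W(X)|,1\}\le\frac{1}{\overline C_W\,\mathrm e}, \] with the convention $1/\infty=\infty^{-1}=0$. Let $\alpha\equiv\overline C_W^{-1}\le 1$ (constant) and $r\equiv\frac{\alpha}{1+\alpha}\le\frac12$. Then, for all $x\in\mathbb X$, \[ |z(x)|\prod_{\substack{X\Subset\mathbb X:\\ x\in X}}\max\Big\{|W(X)|,\ 1+|W(X)-1|\,\alpha^{|S|}\ \Big|\ \varnothing\neq S\subset X\setminus\{x\}\Big\}\le r . \]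
   Context: $\mathbb X$ is a finite or countably infinite set; $X\Subset\mathbb X$ means $X$ is a finite subset of $\mathbb X$. Fix $z:\mathbb X\to\mathbb C$ and $W:\{X\Subset\mathbb X\}\to\mathbb C$; write $W(x)=W(\{x\})$. In the maximum, the max is over $|W(X)|$ together with all numbers $1+|W(X)-1|\alpha^{|S|}$ for nonempty $S\subset X\setminus\{x\}$ (for $X=\{x\}$ the factor is $|W(x)|$). Products of nonnegative numbers over infinite index sets are understood in $[0,\infty]$. *)

theory Defs
  imports "HOL-Analysis.Analysis"
begin

text \<open>Unconditional product of nonnegative factors in [0,\<infinity>] over an arbitrary
  index set: factors \<le> 1 contribute the infimum of their finite partial products,
  factors \<ge> 1 contribute the supremum of their finite partial products
  (with the ennreal convention 0 * \<infinity> = 0). For finite index sets this is the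
  ordinary product.\<close>
definition prod_ennreal :: "('b \<Rightarrow> ennreal) \<Rightarrow> 'b set \<Rightarrow> ennreal" where
  "prod_ennreal f A =
     (INF F\<in>{F. finite F \<and> F \<subseteq> {a\<in>A. f a < 1}}. prod f F) *
     (SUP F\<in>{F. finite F \<and> F \<subseteq> {a\<in>A. 1 \<le> f a}}. prod f F)"

definition C_W :: "('a set \<Rightarrow> complex) \<Rightarrow> 'a \<Rightarrow> ennreal" where
  "C_W W x = 1 + infsum (\<lambda>X. ennreal (cmod (W X - 1))) {X. finite X \<and> {x} \<subset> X}"

definition C_W_bar :: "('a set \<Rightarrow> complex) \<Rightarrow> ennreal" where
  "C_W_bar W = (SUP y. C_W W y)"

definition factor :: "('a set \<Rightarrow> complex) \<Rightarrow> ennreal \<Rightarrow> 'a \<Rightarrow> 'a set \<Rightarrow> ennreal" where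
  "factor W \<alpha> x X = Max ({ennreal (cmod (W X))} \<union>
      {1 + ennreal (cmod (W X - 1)) * \<alpha> ^ card S | S. S \<noteq> {} \<and> S \<subseteq> X - {x}})"

end

theory Submission
  imports Defs
begin

lemma prod_ennreal_ge1:
  assumes "\<forall>b\<in>B. 1 \<le> f b"
  shows "prod_ennreal f B = (SUP F\<in>{F. finite F \<and> F \<subseteq> B}. prod f F)"
proof -
  have e1: "{a\<in>B. f a < 1} = {}" using assms by (auto simp: not_less[symmetric])
  have e2: "{a\<in>B. 1 \<le> f a} = B" using assms by auto
  show ?thesis unfolding prod_ennreal_def e1 e2 by simp
qed

lemma prod_ennreal_insert_le:
  assumes "a \<notin> B" "\<forall>b\<in>B. 1 \<le> f b"
  shows "prod_ennreal f (insert a B) \<le> f a * (SUP F\<in>{F. finite F \<and> F \<subseteq> B}. prod f F)"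
proof (cases "f a < 1")
  case True
  have e1: "{b\<in>insert a B. f b < 1} = {a}" using assms True by (auto simp: not_less[symmetric])
  have e2: "{b\<in>insert a B. 1 \<le> f b} = B" using assms True by auto
  have "(INF F\<in>{F. finite F \<and> F \<subseteq> {a}}. prod f F) \<le> prod f {a}"
    by (rule INF_lower) auto
  then have "(INF F\<in>{F. finite F \<and> F \<subseteq> {a}}. prod f F) \<le> f a" by simp
  then show ?thesis unfolding prod_ennreal_def e1 e2 by (rule mult_right_mono) simp
next
  case False
  then have fa: "1 \<le> f a" by simp
  have e1: "{b\<in>insert a B. f b < 1} = {}" using assms False by (auto simp: not_less[symmetric])
  have e2: "{b\<in>insert a B. 1 \<le> f b} = insert a B" using assms fa by auto
  let ?S = "(SUP F\<in>{F. finite F \<and> F \<subseteq> B}. prod f F)"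
  have "prod f F \<le> f a * ?S" if F: "finite F" "F \<subseteq> insert a B" for F
  proof -
    have up: "prod f (F - {a}) \<le> ?S"
      by (rule SUP_upper) (use F in auto)
    show ?thesis
    proof (cases "a \<in> F")
      case True
      then have "prod f F = f a * prod f (F - {a})"
        using F by (simp add: prod.remove)
      then show ?thesis using up by (simp add: mult_left_mono)
    next
      case False
      then have "prod f F = prod f (F - {a})" by simp
      also have "\<dots> \<le> ?S" by (rule up)
      also have "\<dots> \<le> f a * ?S" using fa mult_right_mono[OF fa, of ?S] by simp
      finally show ?thesis .
    qed
  qed
  then have "(SUP F\<in>{F. finite F \<and> F \<subseteq> insert a B}. prod f F) \<le> f a * ?S"
    by (intro SUP_least) auto
  then show ?thesis unfolding prod_ennreal_def e1 e2 by simp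
qed



lemma real_ineq:
  fixes c :: real assumes "1 \<le> c"
  shows "exp ((c - 1) / c) / (c * exp 1) \<le> (1 / c) / (1 + 1 / c)"
proof -
  have c0: "c > 0" using assms by simp
  have "1 + 1/c \<le> exp (1/c)" by (rule exp_ge_add_one_self)
  have e: "exp ((c - 1) / c) = exp 1 / exp (1/c)"
    using c0 by (simp add: diff_divide_distrib exp_diff)
  have "exp ((c - 1) / c) / (c * exp 1) = 1 / (c * exp (1/c))"
    unfolding e by (simp add: field_simps)
  also have "\<dots> \<le> 1 / (c * (1 + 1/c))"
    using c0 \<open>1 + 1/c \<le> exp (1/c)\<close> add_pos_pos[of 1 "1/c"] by (intro divide_left_mono mult_left_mono mult_pos_pos) auto
  also have "\<dots> = (1 / c) / (1 + 1 / c)" by simp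
  finally show ?thesis .
qed

lemma C_W_ge1: "1 \<le> C_W W x"
  unfolding C_W_def by simp

lemma C_W_bar_ge1: "1 \<le> C_W_bar W"
  unfolding C_W_bar_def by (rule SUP_upper2[OF UNIV_I]) (rule C_W_ge1)

lemma factor_single: "factor W \<alpha> x {x} = ennreal (cmod (W {x}))"
  unfolding factor_def by simp

lemma factor_finite:
  assumes "finite X"
  shows "finite ({ennreal (cmod (W X))} \<union>
      {1 + ennreal (cmod (W X - 1)) * \<alpha> ^ card S | S. S \<noteq> {} \<and> S \<subseteq> X - {x}})"
proof -
  have "{1 + ennreal (cmod (W X - 1)) * \<alpha> ^ card S | S. S \<noteq> {} \<and> S \<subseteq> X - {x}}
     \<subseteq> (\<lambda>S. 1 + ennreal (cmod (W X - 1)) * \<alpha> ^ card S) ` Pow X" by auto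
  moreover have "finite ((\<lambda>S. 1 + ennreal (cmod (W X - 1)) * \<alpha> ^ card S) ` Pow X)"
    using assms by simp
  ultimately show ?thesis by (meson finite_Un finite.intros finite_subset)
qed

lemma factor_ge1:
  assumes "finite X" "{x} \<subset> X"
  shows "1 \<le> factor W \<alpha> x X"
proof -
  obtain y where y: "y \<in> X" "y \<noteq> x" using assms(2) by auto
  have "1 + ennreal (cmod (W X - 1)) * \<alpha> ^ card {y} \<in>
     {1 + ennreal (cmod (W X - 1)) * \<alpha> ^ card S | S. S \<noteq> {} \<and> S \<subseteq> X - {x}}"
    using y by blast
  then have "1 + ennreal (cmod (W X - 1)) * \<alpha> ^ card {y} \<le> factor W \<alpha> x X"
    unfolding factor_def by (intro Max_ge factor_finite assms(1)) auto
  moreover have "1 \<le> 1 + ennreal (cmod (W X - 1)) * \<alpha> ^ card {y}" by simp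
  ultimately show ?thesis by (rule order_trans[rotated])
qed

lemma factor_le:
  assumes "finite X" "\<alpha> \<le> 1"
  shows "factor W \<alpha> x X \<le> max (ennreal (cmod (W X))) 1 * (1 + ennreal (cmod (W X - 1)) * \<alpha>)"
proof -
  let ?R = "max (ennreal (cmod (W X))) 1 * (1 + ennreal (cmod (W X - 1)) * \<alpha>)"
  have r1: "ennreal (cmod (W X)) \<le> ?R"
  proof -
    have "ennreal (cmod (W X)) \<le> max (ennreal (cmod (W X))) 1 * 1" by simp
    also have "\<dots> \<le> ?R" by (intro mult_left_mono add_increasing2) auto
    finally show ?thesis .
  qed
  have r2: "1 + ennreal (cmod (W X - 1)) * \<alpha> ^ k \<le> ?R" if k0: "k \<noteq> 0" for k
  proof -
    have "\<alpha> ^ k \<le> \<alpha>"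
    proof -
      obtain j where "k = Suc j" using k0 not0_implies_Suc by blast
      then have "\<alpha> ^ k = \<alpha> * \<alpha> ^ j" by simp
      also have "\<dots> \<le> \<alpha> * 1" using assms(2) by (intro mult_left_mono power_le_one) auto
      finally show ?thesis by simp
    qed
    then have "1 + ennreal (cmod (W X - 1)) * \<alpha> ^ k \<le> 1 + ennreal (cmod (W X - 1)) * \<alpha>"
      by (intro add_left_mono mult_left_mono) auto
    also have "\<dots> \<le> ?R"
    proof -
      have "1 + ennreal (cmod (W X - 1)) * \<alpha> = 1 * (1 + ennreal (cmod (W X - 1)) * \<alpha>)" by simp
      also have "\<dots> \<le> ?R" by (intro mult_right_mono) auto
      finally show ?thesis .
    qed
    finally show ?thesis .
  qed
  show ?thesis unfolding factor_def
  proof (rule Max.boundedI)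
    show "finite ({ennreal (cmod (W X))} \<union>
      {1 + ennreal (cmod (W X - 1)) * \<alpha> ^ card S | S. S \<noteq> {} \<and> S \<subseteq> X - {x}})"
      by (rule factor_finite[OF assms(1)])
  next
    fix a assume "a \<in> {ennreal (cmod (W X))} \<union>
      {1 + ennreal (cmod (W X - 1)) * \<alpha> ^ card S | S. S \<noteq> {} \<and> S \<subseteq> X - {x}}"
    then show "a \<le> ?R"
    proof
      assume "a \<in> {ennreal (cmod (W X))}" then show ?thesis using r1 by simp
    next
      assume "a \<in> {1 + ennreal (cmod (W X - 1)) * \<alpha> ^ card S | S. S \<noteq> {} \<and> S \<subseteq> X - {x}}"
      then obtain S where S: "a = 1 + ennreal (cmod (W X - 1)) * \<alpha> ^ card S" "S \<noteq> {}" "S \<subseteq> X - {x}"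
        by blast
      have "finite S" using S(3) assms(1) finite_subset by blast
      then have "card S \<noteq> 0" using S(2) by simp
      then show ?thesis using r2 S(1) by simp
    qed
  qed simp
qed


theorem corollary2p2:
  fixes z :: "'a::countable \<Rightarrow> complex" and W :: "'a set \<Rightarrow> complex"
  assumes hyp: "\<And>x. ennreal (cmod (z x * W {x})) *
      prod_ennreal (\<lambda>X. max (ennreal (cmod (W X))) 1) {X. finite X \<and> {x} \<subset> X}
      \<le> inverse (C_W_bar W * ennreal (exp 1))"
  shows "\<forall>x. ennreal (cmod (z x)) *
      prod_ennreal (factor W (inverse (C_W_bar W)) x) {X. finite X \<and> x \<in> X}
      \<le> inverse (C_W_bar W) / (1 + inverse (C_W_bar W))"
proof
  fix x :: 'a
  define M where "M = C_W_bar W"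
  define \<alpha> where "\<alpha> = inverse M"
  define B where "B = {X. finite X \<and> {x} \<subset> X}"
  define f where "f = factor W \<alpha> x"
  define g where "g = (\<lambda>X. max (ennreal (cmod (W X))) 1)"
  define t where "t = (\<lambda>X. cmod (W X - 1))"
  define a where "a = cmod (z x)"
  define w where "w = cmod (W {x})"
  define S where "S = (SUP F\<in>{F. finite F \<and> F \<subseteq> B}. prod f F)"
  define P where "P = prod_ennreal g B"
  have M1: "1 \<le> M" unfolding M_def by (rule C_W_bar_ge1)
  have A: "{X. finite X \<and> x \<in> X} = insert {x} B" unfolding B_def by auto
  have xB: "{x} \<notin> B" unfolding B_def by auto
  have f1: "\<forall>b\<in>B. 1 \<le> f b"
  proof
    fix b assume "b \<in> B"
    then show "1 \<le> f b" unfolding B_def f_def by (intro factor_ge1) auto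
  qed
  have g1: "\<forall>b\<in>B. 1 \<le> g b" unfolding g_def by simp
  have P_eq: "P = (SUP F\<in>{F. finite F \<and> F \<subseteq> B}. prod g F)"
    unfolding P_def by (rule prod_ennreal_ge1[OF g1])
  have gP: "prod g F \<le> P" if "finite F" "F \<subseteq> B" for F
    unfolding P_eq by (rule SUP_upper) (use that in auto)
  have P1: "1 \<le> P" using gP[of "{}"] by simp
  have hx: "ennreal (a * w) * P \<le> inverse (M * ennreal (exp 1))"
    using hyp[of x] unfolding P_def g_def B_def M_def a_def w_def by (simp add: norm_mult)
  have main: "ennreal a * prod_ennreal f (insert {x} B) \<le> ennreal (a * w) * S"
  proof -
    have "ennreal a * prod_ennreal f (insert {x} B) \<le> ennreal a * (f {x} * S)"
      unfolding S_def by (intro mult_left_mono prod_ennreal_insert_le[OF xB f1]) auto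
    also have "\<dots> = ennreal (a * w) * S"
      unfolding f_def factor_single w_def a_def by (simp add: ennreal_mult mult.assoc)
    finally show ?thesis .
  qed
  have goal: "ennreal a * prod_ennreal f (insert {x} B) \<le> \<alpha> / (1 + \<alpha>)"
  proof (cases "M = top")
    case True
    have "inverse (M * ennreal (exp 1)) = 0" using True by simp
    with hx have "ennreal (a * w) * P \<le> 0" by simp
    moreover have "ennreal (a * w) \<le> ennreal (a * w) * P"
      using P1 mult_left_mono[OF P1, of "ennreal (a*w)"] by simp
    ultimately have "ennreal (a * w) = 0" using P1 by auto
    then have "ennreal a * prod_ennreal f (insert {x} B) \<le> 0 * S" using main by simp
    then show ?thesis by (rule order_trans) simp
  next
    case False
    then obtain c where c: "M = ennreal c" "0 \<le> c" by (cases M) auto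
    have c1: "1 \<le> c" using M1 c by simp
    have c0: "0 < c" using c1 by simp
    have al: "\<alpha> = ennreal (1 / c)" unfolding \<alpha>_def c using c0 by (simp add: inverse_ennreal inverse_eq_divide)
    have al1: "\<alpha> \<le> 1" unfolding al using c1 by simp
    have sum_le: "sum t F \<le> c - 1" if F: "finite F" "F \<subseteq> B" for F
    proof -
      have "ennreal (sum t F) = sum (\<lambda>X. ennreal (t X)) F"
        unfolding t_def by (rule sum_ennreal[symmetric]) simp
      also have "\<dots> = infsum (\<lambda>X. ennreal (t X)) F" using F by simp
      also have "\<dots> \<le> infsum (\<lambda>X. ennreal (t X)) B"
        by (rule infsum_mono_neutral) (use F in \<open>auto intro: nonneg_summable_on_complete\<close>)
      finally have "1 + ennreal (sum t F) \<le> C_W W x"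
        unfolding C_W_def B_def t_def by (simp add: add_left_mono)
      also have "\<dots> \<le> M" unfolding M_def C_W_bar_def by (rule SUP_upper) simp
      finally have "ennreal (1 + sum t F) \<le> ennreal c"
        using c by (simp add: ennreal_plus t_def sum_nonneg)
      then show ?thesis using c0 by (simp add: ennreal_le_iff2)
    qed
    have fF: "prod f F \<le> P * ennreal (exp ((c - 1) / c))" if F: "finite F" "F \<subseteq> B" for F
    proof -
      have "prod f F \<le> prod (\<lambda>X. g X * ennreal (1 + t X / c)) F"
      proof (rule prod_mono_ennreal)
        fix X assume "X \<in> F"
        then have "finite X" using F B_def by auto
        then have "f X \<le> g X * (1 + ennreal (t X) * \<alpha>)"
          unfolding f_def g_def t_def by (rule factor_le[OF _ al1])
        also have "\<dots> = g X * ennreal (1 + t X / c)"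
        proof -
          have "ennreal (t X) * ennreal (1 / c) = ennreal (t X * (1 / c))"
            by (rule ennreal_mult[symmetric]) (use c0 in \<open>auto simp: t_def\<close>)
          also have "\<dots> = ennreal (t X / c)" by simp
          finally have "1 + ennreal (t X) * \<alpha> = 1 + ennreal (t X / c)" unfolding al by simp
          also have "\<dots> = ennreal (1 + t X / c)" using c0 by (simp add: t_def)
          finally show ?thesis by simp
        qed
        finally show "f X \<le> g X * ennreal (1 + t X / c)" .
      qed
      also have "\<dots> = prod g F * ennreal (prod (\<lambda>X. 1 + t X / c) F)"
      proof -
        have "prod (\<lambda>X. ennreal (1 + t X / c)) F = ennreal (prod (\<lambda>X. 1 + t X / c) F)"
          by (rule prod_ennreal) (use c0 in \<open>simp add: t_def add_nonneg_nonneg\<close>)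
        then show ?thesis by (simp only: prod.distrib)
      qed
      also have "\<dots> \<le> P * ennreal (exp ((c - 1) / c))"
      proof (intro mult_mono gP F ennreal_leI)
        have "prod (\<lambda>X. 1 + t X / c) F \<le> prod (\<lambda>X. exp (t X / c)) F"
          by (intro prod_mono) (auto simp: t_def c0 less_imp_le exp_ge_add_one_self add_nonneg_nonneg)
        also have "\<dots> = exp (sum t F / c)" using F(1) by (simp add: exp_sum sum_divide_distrib)
        also have "\<dots> \<le> exp ((c - 1) / c)"
          using sum_le[OF F] c0 by (simp add: divide_right_mono)
        finally show "prod (\<lambda>X. 1 + t X / c) F \<le> exp ((c - 1) / c)" .
      qed auto
      finally show ?thesis .
    qed
    have "S \<le> P * ennreal (exp ((c - 1) / c))"
      unfolding S_def by (rule SUP_least) (use fF in auto)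
    then have "ennreal (a * w) * S \<le> ennreal (a * w) * P * ennreal (exp ((c - 1) / c))"
      by (simp add: mult_left_mono mult.assoc)
    also have "\<dots> \<le> inverse (M * ennreal (exp 1)) * ennreal (exp ((c - 1) / c))"
      by (intro mult_right_mono hx) auto
    also have "\<dots> = ennreal (exp ((c - 1) / c) / (c * exp 1))"
    proof -
      have ce: "ennreal c * ennreal (exp 1) = ennreal (c * exp 1)"
        by (rule ennreal_mult[symmetric]) (use c0 in auto)
      have "inverse (ennreal (c * exp 1)) = ennreal (inverse (c * exp 1))"
        by (rule inverse_ennreal) (use c0 in auto)
      then have "inverse (M * ennreal (exp 1)) * ennreal (exp ((c - 1) / c))
          = ennreal (inverse (c * exp 1)) * ennreal (exp ((c - 1) / c))"
        unfolding c ce by simp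
      also have "\<dots> = ennreal (inverse (c * exp 1) * exp ((c - 1) / c))"
        by (rule ennreal_mult[symmetric]) (use c0 in auto)
      also have "inverse (c * exp 1) * exp ((c - 1) / c) = exp ((c - 1) / c) / (c * exp 1)"
        by (simp add: divide_inverse mult.commute)
      finally show ?thesis .
    qed
    also have "\<dots> \<le> ennreal ((1 / c) / (1 + 1 / c))"
      by (intro ennreal_leI real_ineq c1)
    also have "\<dots> = \<alpha> / (1 + \<alpha>)"
    proof -
      have p: "0 < 1 + 1 / c" using c0 add_pos_pos[of 1 "1/c"] by simp
      have "1 + \<alpha> = ennreal (1 + 1 / c)" unfolding al using c0 by simp
      then have "\<alpha> / (1 + \<alpha>) = ennreal (1 / c) / ennreal (1 + 1 / c)" unfolding al by simp
      also have "\<dots> = ennreal ((1 / c) / (1 + 1 / c))"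
        by (rule divide_ennreal) (use c0 p in auto)
      finally show ?thesis by simp
    qed
    finally show ?thesis using main by (rule order_trans[rotated])
  qed
  then show "ennreal (cmod (z x)) *
      prod_ennreal (factor W (inverse (C_W_bar W)) x) {X. finite X \<and> x \<in> X}
      \<le> inverse (C_W_bar W) / (1 + inverse (C_W_bar W))"
    unfolding A a_def f_def \<alpha>_def M_def .
qed

end
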